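(* Let $(X,G)$ be a minimal continuous action and $m\in\mathbb{N}$, $m\geq 2$. Then $(X,G)$ is cover $m$-equicontinuous if and only if it is not compactly $m$-sensitive.
   Context: $G$ is a locally compact topological group acting continuously on a compact metric space $(X,d)$; minimal means every orbit is dense. For compact $K\subset G$, a set $A\subset G$ is $K$-covering if $G=KA$. A point $x\in X$ is a covering $m$-equicontinuity point if for every $\varepsilon>0$ there exist an open neighborhood $U$ of $x$ and a compact $K\subset G$ such that for all $x_1,\dots,x_m\in U$ the set $\{g\in G:\exists i\neq j,\ d(gx_i,gx_j)\leq\varepsilon\}$ is $K$-covering. $(X,G)$ is cover $m$-equicontinuous if every point is a covering $m$-equicontinuity point. $(X,G)$ is compactly $m$-sensitive if there exists $\varepsilon>0$ such that for every nonempty open $U\subset X$ and every compact $K\subset G$ there exist $x_1,\dots,x_m\in U$ and $h\in G$ with $Kh\subset\{g\in G: d(gx_i,gx_j)>\varepsilon\ \forall i\neq j\}$. *)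

theory Defs
  imports "HOL-Analysis.Analysis"
begin

text \<open>The group G is modelled as a type of class group_add (not necessarily commutative),
  written additively: the group product g*h is g + h, the identity is 0.
  X is modelled as a type of class metric_space, assumed compact.\<close>

definition topological_group :: "'g::{group_add,topological_space} itself \<Rightarrow> bool" where
  "topological_group _ \<longleftrightarrow>
     continuous_on (UNIV :: ('g \<times> 'g) set) (\<lambda>p. fst p + snd p) \<and>
     continuous_on (UNIV :: 'g set) uminus"

definition locally_compact_group :: "'g::{group_add,topological_space} itself \<Rightarrow> bool" where
  "locally_compact_group T \<longleftrightarrow> topological_group T \<and> locally compact (UNIV :: 'g set)"

definition continuous_action :: "('g::{group_add,topological_space} \<Rightarrow> 'x::topological_space \<Rightarrow> 'x) \<Rightarrow> bool" where
  "continuous_action act \<longleftrightarrow>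
     (\<forall>x. act 0 x = x) \<and> (\<forall>g h x. act (g + h) x = act g (act h x)) \<and>
     continuous_on UNIV (\<lambda>p. act (fst p) (snd p))"

definition minimal_action :: "('g \<Rightarrow> 'x::topological_space \<Rightarrow> 'x) \<Rightarrow> bool" where
  "minimal_action act \<longleftrightarrow> (\<forall>x. closure (range (\<lambda>g. act g x)) = UNIV)"

definition K_covering :: "'g::group_add set \<Rightarrow> 'g set \<Rightarrow> bool" where
  "K_covering K A \<longleftrightarrow> {k + a | k a. k \<in> K \<and> a \<in> A} = UNIV"

definition covering_equicont_point ::
  "nat \<Rightarrow> ('g::{group_add,topological_space} \<Rightarrow> 'x::metric_space \<Rightarrow> 'x) \<Rightarrow> 'x \<Rightarrow> bool" where
  "covering_equicont_point m act x \<longleftrightarrow>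
     (\<forall>\<epsilon>>0. \<exists>U K. open U \<and> x \<in> U \<and> compact K \<and>
        (\<forall>xs::nat \<Rightarrow> 'x. (\<forall>i<m. xs i \<in> U) \<longrightarrow>
           K_covering K {g. \<exists>i<m. \<exists>j<m. i \<noteq> j \<and> dist (act g (xs i)) (act g (xs j)) \<le> \<epsilon>}))"

definition cover_equicontinuous ::
  "nat \<Rightarrow> ('g::{group_add,topological_space} \<Rightarrow> 'x::metric_space \<Rightarrow> 'x) \<Rightarrow> bool" where
  "cover_equicontinuous m act \<longleftrightarrow> (\<forall>x. covering_equicont_point m act x)"

definition compactly_sensitive ::
  "nat \<Rightarrow> ('g::{group_add,topological_space} \<Rightarrow> 'x::metric_space \<Rightarrow> 'x) \<Rightarrow> bool" where
  "compactly_sensitive m act \<longleftrightarrow>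
     (\<exists>\<epsilon>>0. \<forall>U K. open U \<and> U \<noteq> {} \<and> compact K \<longrightarrow>
        (\<exists>(xs::nat \<Rightarrow> 'x) h. (\<forall>i<m. xs i \<in> U) \<and>
           (\<lambda>k. k + h) ` K \<subseteq> {g. \<forall>i<m. \<forall>j<m. i \<noteq> j \<longrightarrow> dist (act g (xs i)) (act g (xs j)) > \<epsilon>}))"

end

theory Submission
  imports Defs
begin

theorem proposition5p3:
  fixes act :: "'g::{group_add,t2_space} \<Rightarrow> 'x::metric_space \<Rightarrow> 'x"
    and m :: nat
  assumes "locally_compact_group TYPE('g)"
    and "compact (UNIV :: 'x set)"
    and "continuous_action act"
    and "minimal_action act"
    and "m \<ge> 2"
  shows "cover_equicontinuous m act \<longleftrightarrow> \<not> compactly_sensitive m act"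
proof -
  have um: "continuous_on (UNIV::'g set) uminus"
    using assms(1) by (simp add: locally_compact_group_def topological_group_def)
  have cK: "compact (uminus ` K)" if "compact K" for K :: "'g set"
    by (rule compact_continuous_image[OF continuous_on_subset[OF um] that]) simp
  have ca: "continuous_on UNIV (\<lambda>p. act (fst p) (snd p))"
    and ac: "\<And>g h x. act (g + h) x = act g (act h x)"
    using assms(3) by (auto simp: continuous_action_def)
  have cg: "continuous_on UNIV (act g)" for g
  proof -
    have "continuous_on UNIV ((\<lambda>p. act (fst p) (snd p)) \<circ> (\<lambda>y. (g, y)))"
      by (rule continuous_on_compose[OF continuous_on_Pair[OF continuous_on_const continuous_on_id]]) (rule continuous_on_subset[OF ca], simp)
    thus ?thesis by (simp add: o_def)
  qed
  show ?thesis
  proof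
    assume ce: "cover_equicontinuous m act"
    show "\<not> compactly_sensitive m act"
    proof
      assume "compactly_sensitive m act"
      then obtain \<epsilon> where e: "\<epsilon> > 0" and S: "\<forall>U K. open U \<and> U \<noteq> {} \<and> compact K \<longrightarrow>
        (\<exists>(xs::nat \<Rightarrow> 'x) h. (\<forall>i<m. xs i \<in> U) \<and>
           (\<lambda>k. k + h) ` K \<subseteq> {g. \<forall>i<m. \<forall>j<m. i \<noteq> j \<longrightarrow> dist (act g (xs i)) (act g (xs j)) > \<epsilon>})"
        unfolding compactly_sensitive_def by (elim exE conjE)
      fix x :: 'x
      from ce have "\<forall>\<epsilon>>0. \<exists>U K. open U \<and> x \<in> U \<and> compact K \<and>
        (\<forall>xs::nat \<Rightarrow> 'x. (\<forall>i<m. xs i \<in> U) \<longrightarrow>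
           K_covering K {g. \<exists>i<m. \<exists>j<m. i \<noteq> j \<and> dist (act g (xs i)) (act g (xs j)) \<le> \<epsilon>})"
        unfolding cover_equicontinuous_def covering_equicont_point_def by (rule spec)
      from this[rule_format, OF e] obtain U K where U: "open U" "x \<in> U" "compact K" and
        C: "\<forall>xs::nat \<Rightarrow> 'x. (\<forall>i<m. xs i \<in> U) \<longrightarrow>
           K_covering K {g. \<exists>i<m. \<exists>j<m. i \<noteq> j \<and> dist (act g (xs i)) (act g (xs j)) \<le> \<epsilon>}"
        by (elim exE conjE)
      have "U \<noteq> {}" using U(2) by blast
      from S[rule_format, OF conjI[OF U(1) conjI[OF this cK[OF U(3)]]]] obtain xs h where xs: "\<forall>i<m. xs i \<in> U"
        and sub: "(\<lambda>k. k + h) ` uminus ` K \<subseteq> {g. \<forall>i<m. \<forall>j<m. i \<noteq> j \<longrightarrow> dist (act g (xs i)) (act g (xs j)) > \<epsilon>}"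
        by (elim exE conjE)
      from C[THEN spec, of xs, THEN mp, OF xs] have "h \<in> {k + a | k a. k \<in> K \<and> a \<in> {g. \<exists>i<m. \<exists>j<m. i \<noteq> j \<and> dist (act g (xs i)) (act g (xs j)) \<le> \<epsilon>}}"
        unfolding K_covering_def by simp
      then obtain k a i j where k: "k \<in> K" "h = k + a" "i<m" "j<m" "i\<noteq>j"
        "dist (act a (xs i)) (act a (xs j)) \<le> \<epsilon>" by blast
      have "a = - k + h" using k(2) by (simp add: add.assoc[symmetric])
      hence "a \<in> (\<lambda>k. k + h) ` uminus ` K" using k(1) by blast
      with sub have "\<forall>i<m. \<forall>j<m. i \<noteq> j \<longrightarrow> dist (act a (xs i)) (act a (xs j)) > \<epsilon>" by blast
      with k(3,4,5,6) show False by (meson not_less)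
    qed
  next
    assume ns: "\<not> compactly_sensitive m act"
    show "cover_equicontinuous m act"
      unfolding cover_equicontinuous_def covering_equicont_point_def
    proof (intro allI impI)
      fix x :: 'x and \<epsilon> :: real
      assume e: "\<epsilon> > 0"
      have "\<exists>U K. open U \<and> U \<noteq> {} \<and> compact K \<and> \<not>
        (\<exists>(xs::nat \<Rightarrow> 'x) h. (\<forall>i<m. xs i \<in> U) \<and>
           (\<lambda>k. k + h) ` K \<subseteq> {g. \<forall>i<m. \<forall>j<m. i \<noteq> j \<longrightarrow> dist (act g (xs i)) (act g (xs j)) > \<epsilon>})"
      proof (rule ccontr)
        assume "\<not> ?thesis"
        hence "\<forall>U K. open U \<and> U \<noteq> {} \<and> compact K \<longrightarrow>
        (\<exists>(xs::nat \<Rightarrow> 'x) h. (\<forall>i<m. xs i \<in> U) \<and>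
           (\<lambda>k. k + h) ` K \<subseteq> {g. \<forall>i<m. \<forall>j<m. i \<noteq> j \<longrightarrow> dist (act g (xs i)) (act g (xs j)) > \<epsilon>})"
          by blast
        with e have "compactly_sensitive m act" unfolding compactly_sensitive_def by blast
        with ns show False by contradiction
      qed
      then obtain U K where U: "open U" "U \<noteq> {}" "compact K" and
        N0: "\<not>
        (\<exists>(xs::nat \<Rightarrow> 'x) h. (\<forall>i<m. xs i \<in> U) \<and>
           (\<lambda>k. k + h) ` K \<subseteq> {g. \<forall>i<m. \<forall>j<m. i \<noteq> j \<longrightarrow> dist (act g (xs i)) (act g (xs j)) > \<epsilon>})"
        by (elim exE conjE)
      have N: "\<not> (\<lambda>k. k + h) ` K \<subseteq> {g. \<forall>i<m. \<forall>j<m. i \<noteq> j \<longrightarrow> dist (act g (xs i)) (act g (xs j)) > \<epsilon>}"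
        if "\<forall>i<m. xs i \<in> U" for xs :: "nat \<Rightarrow> 'x" and h
        using N0 that by blast
      have "U \<inter> closure (range (\<lambda>g. act g x)) \<noteq> {}"
        using assms(4) U(2) by (simp add: minimal_action_def)
      hence "U \<inter> range (\<lambda>g. act g x) \<noteq> {}" using open_Int_closure_eq_empty[OF U(1)] by blast
      then obtain g where g: "act g x \<in> U" by auto
      define U' where "U' = act g -` U"
      have oU': "open U'" unfolding U'_def
        using continuous_on_open_vimage[OF open_UNIV, of "act g"] cg[of g] U(1) by simp
      show "\<exists>U K. open U \<and> x \<in> U \<and> compact K \<and>
        (\<forall>xs::nat \<Rightarrow> 'x. (\<forall>i<m. xs i \<in> U) \<longrightarrow>
           K_covering K {g. \<exists>i<m. \<exists>j<m. i \<noteq> j \<and> dist (act g (xs i)) (act g (xs j)) \<le> \<epsilon>})"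
      proof (intro exI conjI allI impI)
        show "open U'" by fact
        show "x \<in> U'" using g by (simp add: U'_def)
        show "compact (uminus ` K)" by (rule cK[OF U(3)])
        fix xs :: "nat \<Rightarrow> 'x"
        assume xs: "\<forall>i<m. xs i \<in> U'"
        show "K_covering (uminus ` K) {g. \<exists>i<m. \<exists>j<m. i \<noteq> j \<and> dist (act g (xs i)) (act g (xs j)) \<le> \<epsilon>}"
          unfolding K_covering_def
        proof (intro set_eqI iffI)
          fix g' :: 'g
          have "\<forall>i<m. act g (xs i) \<in> U" using xs by (simp add: U'_def)
          from N[OF this, of "g' - g"] have "\<exists>k\<in>K. \<exists>i<m. \<exists>j<m. i\<noteq>j \<and>
            dist (act (k + (g' - g)) (act g (xs i))) (act (k + (g' - g)) (act g (xs j))) \<le> \<epsilon>"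
            unfolding image_subset_iff mem_Collect_eq not_less[symmetric] by blast
          then obtain k i j where k: "k \<in> K" "i<m" "j<m" "i\<noteq>j"
            "dist (act (k + (g' - g)) (act g (xs i))) (act (k + (g' - g)) (act g (xs j))) \<le> \<epsilon>"
            by blast
          have "act (k + (g' - g)) (act g y) = act (k + g') y" for y
            by (simp add: ac[symmetric] add.assoc)
          with k have "dist (act (k + g') (xs i)) (act (k + g') (xs j)) \<le> \<epsilon>" by simp
          moreover have "g' = - k + (k + g')" by (simp add: add.assoc[symmetric])
          ultimately show "g' \<in> {k + a | k a. k \<in> uminus ` K \<and> a \<in> {g. \<exists>i<m. \<exists>j<m. i \<noteq> j \<and> dist (act g (xs i)) (act g (xs j)) \<le> \<epsilon>}}"
            using k by blast
        qed simp
      qed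
    qed
  qed
qed

end
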